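(* Let $\Psi$ be an Orlicz function and $\mu$ a finite positive Borel measure on $\overline{\mathbb D}$. 1) $\mu$ is a $\Psi$-Carleson measure if and only if there is $C\ge1$ with $\|u_{\xi,1-h}\|_{L^\Psi(\mu)}\le\dfrac{C}{\Psi^{-1}(1/h)}$ for every $\xi\in\mathbb T$ and every $h\in(0,1)$. 2) $\mu$ is a vanishing $\Psi$-Carleson measure if and only if $\lim_{h\to0}\sup_{\xi\in\mathbb T}\Psi^{-1}(1/h)\,\|u_{\xi,1-h}\|_{L^\Psi(\mu)}=0$.
   Context: An Orlicz function is a continuous, strictly convex, increasing $\Psi\colon[0,\infty)\to[0,\infty)$ with $\Psi(0)=0$ and $\Psi(x)/x\to\infty$. $\|f\|_{L^\Psi(\mu)}=\inf\{C>0:\int\Psi(|f|/C)\,d\mu\le1\}$. For $\xi\in\mathbb T$, $0\le r<1$, $u_{\xi,r}(z)=\big(\frac{1-r}{1-\bar\xi rz}\big)^2$ (continuous on $\overline{\mathbb D}$). $W(\xi,h)=\{z\in\overline{\mathbb D}:1-h<|z|\le1,\ |\arg(z\bar\xi)|<h\}$, $\rho_\mu(h)=\sup_{\xi}\mu(W(\xi,h))$. $\mu$ is $\Psi$-Carleson if there is $A>0$ with $\mu(W(\xi,h))\le1/\Psi(A\Psi^{-1}(1/h))$ for all $\xi\in\mathbb T$, $h\in(0,1)$; it is vanishing $\Psi$-Carleson if for every $A>0$, $\lim_{h\to0}\Psi(A\Psi^{-1}(1/h))\,\rho_\mu(h)=0$. *)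

theory Defs
  imports "HOL-Analysis.Analysis"
begin

definition strictly_convex_on :: "real set \<Rightarrow> (real \<Rightarrow> real) \<Rightarrow> bool" where
  "strictly_convex_on S f \<longleftrightarrow>
     (\<forall>x\<in>S. \<forall>y\<in>S. \<forall>t. x \<noteq> y \<and> 0 < t \<and> t < 1 \<longrightarrow>
        f ((1 - t) * x + t * y) < (1 - t) * f x + t * f y)"

definition orlicz_function :: "(real \<Rightarrow> real) \<Rightarrow> bool" where
  "orlicz_function \<Psi> \<longleftrightarrow>
     continuous_on {0..} \<Psi> \<and>
     strictly_convex_on {0..} \<Psi> \<and>
     strict_mono_on {0..} \<Psi> \<and>
     \<Psi> 0 = 0 \<and>
     (\<forall>x\<ge>0. \<Psi> x \<ge> 0) \<and>
     filterlim (\<lambda>x. \<Psi> x / x) at_top at_top"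

definition orlicz_inv :: "(real \<Rightarrow> real) \<Rightarrow> real \<Rightarrow> real" where
  "orlicz_inv \<Psi> = inv_into {0..} \<Psi>"

definition orlicz_norm :: "(real \<Rightarrow> real) \<Rightarrow> 'a measure \<Rightarrow> ('a \<Rightarrow> complex) \<Rightarrow> real" where
  "orlicz_norm \<Psi> \<mu> f =
     Inf {C. C > 0 \<and> (\<integral>\<^sup>+ x. ennreal (\<Psi> (norm (f x) / C)) \<partial>\<mu>) \<le> 1}"

definition u_fun :: "complex \<Rightarrow> real \<Rightarrow> complex \<Rightarrow> complex" where
  "u_fun \<xi> r z = ((1 - of_real r) / (1 - cnj \<xi> * of_real r * z)) ^ 2"

definition window :: "complex \<Rightarrow> real \<Rightarrow> complex set" where
  "window \<xi> h = {z. norm z \<le> 1 \<and> 1 - h < norm z \<and> \<bar>Arg (z * cnj \<xi>)\<bar> < h}"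

definition rho :: "complex measure \<Rightarrow> real \<Rightarrow> real" where
  "rho \<mu> h = (SUP \<xi>\<in>sphere 0 1. measure \<mu> (window \<xi> h))"

definition psi_carleson :: "(real \<Rightarrow> real) \<Rightarrow> complex measure \<Rightarrow> bool" where
  "psi_carleson \<Psi> \<mu> \<longleftrightarrow>
     (\<exists>A>0. \<forall>\<xi>\<in>sphere 0 1. \<forall>h\<in>{0<..<1}.
        measure \<mu> (window \<xi> h) \<le> 1 / \<Psi> (A * orlicz_inv \<Psi> (1 / h)))"

definition vanishing_psi_carleson :: "(real \<Rightarrow> real) \<Rightarrow> complex measure \<Rightarrow> bool" where
  "vanishing_psi_carleson \<Psi> \<mu> \<longleftrightarrow>
     (\<forall>A>0. ((\<lambda>h. \<Psi> (A * orlicz_inv \<Psi> (1 / h)) * rho \<mu> h) \<longlongrightarrow> 0) (at_right 0))"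

end

theory Submission
  imports Defs
begin

lemma orl_mono:
  assumes "orlicz_function P" "0 \<le> a" "a \<le> b" shows "P a \<le> P b"
proof (cases "a = b")
  case False
  with assms have "a < b" by simp
  with assms show ?thesis unfolding orlicz_function_def strict_mono_on_def
    by (auto intro: less_imp_le)
qed simp

lemma orl_strict:
  assumes "orlicz_function P" "0 \<le> a" "a < b" shows "P a < P b"
  using assms unfolding orlicz_function_def strict_mono_on_def by auto

lemma orl_pos:
  assumes "orlicz_function P" "0 < a" shows "0 < P a"
  using orl_strict[OF assms(1) _ assms(2)] assms(1) unfolding orlicz_function_def by auto

lemma orl_nonneg:
  assumes "orlicz_function P" "0 \<le> a" shows "0 \<le> P a"
  using assms unfolding orlicz_function_def by auto

lemma orl_sub:
  assumes "orlicz_function P" "0 \<le> l" "l \<le> 1" "0 \<le> x" shows "P (l * x) \<le> l * P x"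
proof -
  consider "l = 0" | "l = 1" | "x = 0" | "0 < l" "l < 1" "x \<noteq> 0" using assms by linarith
  then show ?thesis
  proof cases
    case 4
    have conv: "strictly_convex_on {0..} P" using assms(1) unfolding orlicz_function_def by auto
    have "P ((1 - l) * 0 + l * x) < (1 - l) * P 0 + l * P x"
      using conv[unfolded strictly_convex_on_def, rule_format, of 0 x l] assms 4 by auto
    then show ?thesis using assms(1) unfolding orlicz_function_def by auto
  qed (use assms in \<open>auto simp: orlicz_function_def\<close>)
qed

lemma orl_surj:
  assumes "orlicz_function P" "0 \<le> s" shows "\<exists>x\<ge>0. P x = s"
proof -
  have "filterlim (\<lambda>x. P x / x) at_top at_top" using assms unfolding orlicz_function_def by auto
  then have "eventually (\<lambda>x. P x / x \<ge> 1) at_top" by (simp add: filterlim_at_top)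
  then obtain N where N: "\<And>x. x \<ge> N \<Longrightarrow> P x / x \<ge> 1" by (auto simp: eventually_at_top_linorder)
  define b where "b = max N (max s 1)"
  have "P b / b \<ge> 1" by (rule N) (simp add: b_def)
  moreover have "b \<ge> 1" using b_def by auto
  ultimately have "P b \<ge> b" by (simp add: le_divide_eq)
  moreover have "s \<le> b" by (simp add: b_def)
  ultimately have "s \<le> P b" by linarith
  moreover have "P 0 \<le> s" using assms unfolding orlicz_function_def by auto
  moreover have "continuous_on {0..b} P" using assms unfolding orlicz_function_def
    by (auto intro: continuous_on_subset)
  moreover have "0 \<le> b" by (simp add: b_def)
  ultimately obtain x where "0 \<le> x" "x \<le> b" "P x = s"
    using IVT'[of P 0 s b] by blast
  then show ?thesis by auto
qed

lemma orl_inj: "orlicz_function P \<Longrightarrow> inj_on P {0..}"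
  unfolding orlicz_function_def using strict_mono_on_imp_inj_on by blast

lemma orl_inv:
  assumes "orlicz_function P" "0 \<le> s"
  shows "0 \<le> orlicz_inv P s" "P (orlicz_inv P s) = s"
proof -
  obtain x where "x \<ge> 0" "P x = s" using orl_surj[OF assms] by auto
  then have "s \<in> P ` {0..}" by auto
  then show "0 \<le> orlicz_inv P s" "P (orlicz_inv P s) = s"
    unfolding orlicz_inv_def
    using inv_into_into[of s P "{0..}"] f_inv_into_f[of s P "{0..}"] by auto
qed

lemma orl_inv_f:
  assumes "orlicz_function P" "0 \<le> x" shows "orlicz_inv P (P x) = x"
  unfolding orlicz_inv_def using orl_inj[OF assms(1)] assms(2) by (simp add: inv_into_f_f)

lemma orl_inv_mono:
  assumes "orlicz_function P" "0 \<le> s" "s \<le> t" shows "orlicz_inv P s \<le> orlicz_inv P t"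
proof (rule ccontr)
  assume "\<not> ?thesis"
  then have "orlicz_inv P t < orlicz_inv P s" by simp
  then have "P (orlicz_inv P t) < P (orlicz_inv P s)"
    using orl_strict[OF assms(1)] orl_inv(1)[OF assms(1), of t] assms by auto
  then show False using orl_inv(2)[OF assms(1)] assms by auto
qed

lemma orl_inv_pos:
  assumes "orlicz_function P" "0 < s" shows "0 < orlicz_inv P s"
  using orl_inv[OF assms(1), of s] assms unfolding orlicz_function_def
  by (metis order_less_le)

lemma orl_inv_super:
  assumes "orlicz_function P" "0 \<le> l" "l \<le> 1" "0 \<le> s"
  shows "l * orlicz_inv P s \<le> orlicz_inv P (l * s)"
proof -
  have le: "P (l * orlicz_inv P s) \<le> l * s"
    using orl_sub[OF assms(1-3), of "orlicz_inv P s"] orl_inv[OF assms(1,4)] by auto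
  have "orlicz_inv P (P (l * orlicz_inv P s)) \<le> orlicz_inv P (l * s)"
  proof (rule orl_inv_mono[OF assms(1)])
    show "0 \<le> P (l * orlicz_inv P s)"
      using orl_nonneg[OF assms(1)] orl_inv(1)[OF assms(1,4)] assms(2) by simp
  qed (rule le)
  then show ?thesis using orl_inv_f[OF assms(1)] orl_inv[OF assms(1,4)] assms by auto
qed

lemma ReIm_Arg:
  assumes "z \<noteq> 0"
  shows "Re z = cmod z * cos (Arg z)" "Im z = cmod z * sin (Arg z)"
  using assms Arg_eq [of z] by (metis Re_exp exp_Ln norm_exp_eq_Re Arg_def)
    (metis assms Im_exp exp_Ln norm_exp_eq_Re Arg_def)

lemma one_minus_cos_le: "1 - cos (x::real) \<le> x^2 / 2"
proof -
  have "cos x = 1 - 2 * sin (x/2) ^ 2" using cos_double_sin[of "x/2"] by simp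
  moreover have "sin (x/2) ^ 2 \<le> (x/2)^2"
    using abs_sin_x_le_abs_x[of "x/2"] by (metis abs_ge_zero power2_abs power_mono)
  ultimately show ?thesis by (simp add: power_divide)
qed

lemma sin_ge_half:
  fixes x :: real
  assumes "0 \<le> x" "x \<le> pi/3"
  shows "x / 2 \<le> sin x"
proof -
  let ?f = "\<lambda>x. sin x - x/2"
  have "\<And>u. \<lbrakk>0 \<le> u; u \<le> x\<rbrakk> \<Longrightarrow> (?f has_real_derivative cos u - 1/2) (at u)"
    by (auto intro!: derivative_eq_intros)
  moreover have "\<And>u. \<lbrakk>0 \<le> u; u \<le> x\<rbrakk> \<Longrightarrow> 0 \<le> cos u - 1/2"
  proof -
    fix u assume "0 \<le> u" "u \<le> x"
    then have "cos (pi/3) \<le> cos u" using assms by (intro cos_monotone_0_pi_le) auto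
    then show "0 \<le> cos u - 1/2" by (simp add: cos_60)
  qed
  ultimately have "?f 0 \<le> ?f x"
    by (intro DERIV_nonneg_imp_nondecreasing[OF assms(1)]) blast
  then show ?thesis by simp
qed

lemma sin_sq_ge:
  fixes t th :: real
  assumes "0 < t" "t \<le> 1" "t \<le> \<bar>th\<bar>" "\<bar>th\<bar> \<le> pi" "0 < cos th"
  shows "t^2 / 4 \<le> (sin th)^2"
proof -
  define x where "x = \<bar>th\<bar>"
  have sx: "\<bar>sin th\<bar> = sin x"
    using sin_ge_zero[of x] assms unfolding x_def by (cases "th \<ge> 0") auto
  have cx: "cos x = cos th" unfolding x_def by (cases "th \<ge> 0") auto
  have "x < pi/2"
  proof (rule ccontr)
    assume "\<not> x < pi/2"
    then have "cos x \<le> cos (pi/2)" using assms unfolding x_def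
      by (intro cos_monotone_0_pi_le) auto
    then show False using assms cx by simp
  qed
  have "t / 2 \<le> sin x"
  proof (cases "x \<le> pi/3")
    case True
    then show ?thesis using sin_ge_half[of x] assms unfolding x_def by auto
  next
    case False
    then have "sin (pi/3) \<le> sin x" using \<open>x < pi/2\<close> by (intro sin_monotone_2pi_le) auto
    then have "sqrt 3 / 2 \<le> sin x" by (simp add: sin_60)
    moreover have "1 \<le> sqrt 3" by simp
    ultimately show ?thesis using assms by linarith
  qed
  then have "(t/2)^2 \<le> (sin x)^2" using assms by (intro power_mono) auto
  then show ?thesis using sx by (simp add: power_divide) (metis power2_abs)
qed

lemma u_norm:
  assumes "cmod \<xi> = 1" "0 < h" "h < 1"
  shows "cmod (u_fun \<xi> (1 - h) z) = h^2 / (cmod (1 - of_real (1 - h) * (z * cnj \<xi>)))^2"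
proof -
  have e: "cnj \<xi> * of_real (1 - h) * z = of_real (1 - h) * (z * cnj \<xi>)" by (simp add: mult_ac)
  have e2: "1 - complex_of_real (1 - h) = of_real h" by simp
  show ?thesis unfolding u_fun_def e e2 using assms by (simp add: norm_divide norm_power power_divide)
qed

lemma real_id1:
  fixes a c sn :: real assumes "sn^2 + c^2 = 1"
  shows "(1 - a * c)^2 + (a * sn)^2 = (1 - a)^2 + 2 * a * (1 - c)"
        "(1 - a * c)^2 + (a * sn)^2 = (a - c)^2 + sn^2"
proof -
  have "(a * sn)^2 = a^2 * (1 - c^2)" using assms by (simp add: power_mult_distrib)
  moreover have "sn^2 = 1 - c^2" using assms by simp
  ultimately show "(1 - a * c)^2 + (a * sn)^2 = (1 - a)^2 + 2 * a * (1 - c)"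
        "(1 - a * c)^2 + (a * sn)^2 = (a - c)^2 + sn^2"
    by (simp_all add: power2_eq_square algebra_simps)
qed

lemma den_sq:
  assumes "w \<noteq> 0"
  shows "(cmod (1 - of_real r * w))^2 = (1 - r * cmod w)^2 + 2 * (r * cmod w) * (1 - cos (Arg w))"
        "(cmod (1 - of_real r * w))^2 = (r * cmod w - cos (Arg w))^2 + (sin (Arg w))^2"
proof -
  have "(cmod (1 - of_real r * w))^2 = (1 - r * Re w)^2 + (r * Im w)^2"
    by (simp add: cmod_power2)
  also have "\<dots> = (1 - (r * cmod w) * cos (Arg w))^2 + ((r * cmod w) * sin (Arg w))^2"
    using ReIm_Arg[OF assms] by (simp add: mult.assoc)
  finally have e: "(cmod (1 - of_real r * w))^2 = (1 - (r * cmod w) * cos (Arg w))^2 + ((r * cmod w) * sin (Arg w))^2" .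
  show "(cmod (1 - of_real r * w))^2 = (1 - r * cmod w)^2 + 2 * (r * cmod w) * (1 - cos (Arg w))"
        "(cmod (1 - of_real r * w))^2 = (r * cmod w - cos (Arg w))^2 + (sin (Arg w))^2"
    unfolding e by (rule real_id1, simp)+
qed

lemma u_le_one:
  assumes "cmod \<xi> = 1" "0 < h" "h < 1" "cmod z \<le> 1"
  shows "cmod (u_fun \<xi> (1 - h) z) \<le> 1"
proof -
  let ?w = "z * cnj \<xi>"
  have nw: "cmod ?w = cmod z" using assms by (simp add: norm_mult)
  have A: "(1 - h) * cmod z \<le> 1 - h" using assms by (intro mult_left_le) auto
  have c: "cmod (1 - complex_of_real h) = 1 - h"
  proof -
    have "1 - complex_of_real h = complex_of_real (1-h)" by simp
    then show ?thesis using assms by (simp only: norm_of_real)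
  qed
  have "h \<le> 1 - cmod (of_real (1 - h) * ?w)" using nw c
    using assms(1) by (simp add: norm_mult) (use A in linarith)
  also have "\<dots> \<le> cmod (1 - of_real (1 - h) * ?w)"
    by (metis norm_one norm_triangle_ineq2)
  finally have "h^2 \<le> (cmod (1 - of_real (1 - h) * ?w))^2" using assms by (intro power_mono) auto
  then show ?thesis using u_norm[OF assms(1-3)] assms
    by (simp add: divide_le_eq_1)
qed

lemma den_ge:
  assumes "0 \<le> r" "r * cmod w \<le> 1"
  shows "(1 - r * cmod w)^2 \<le> (cmod (1 - of_real r * w))^2"
proof -
  have "1 - r * cmod w \<le> cmod (1 - of_real r * w)"
    using norm_triangle_ineq2[of 1 "of_real r * w"] assms by (simp add: norm_mult)
  then show ?thesis using assms by (intro power_mono) auto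
qed

lemma u_lower:
  assumes "cmod \<xi> = 1" "0 < h" "h < 1" "z \<in> window \<xi> h"
  shows "1/5 \<le> cmod (u_fun \<xi> (1 - h) z)"
proof -
  define w where "w = z * cnj \<xi>"
  define a where "a = (1 - h) * cmod w"
  define D where "D = (cmod (1 - of_real (1 - h) * w))^2"
  have z: "cmod z \<le> 1" "1 - h < cmod z" "\<bar>Arg w\<bar> < h" using assms(4) unfolding window_def w_def by auto
  have nw: "cmod w = cmod z" using assms unfolding w_def by (simp add: norm_mult)
  have w0: "w \<noteq> 0" using nw z assms by auto
  have a1: "a \<le> 1 - h" unfolding a_def nw using z assms by (intro mult_left_le) auto
  have a2: "(1 - h) * (1 - h) \<le> a" unfolding a_def nw using z assms by (intro mult_left_mono) auto
  have a0: "0 \<le> a" unfolding a_def using assms by auto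
  have hh: "0 \<le> h*h" by simp
  have e: "(1-h)*(1-h) = 1 - 2*h + h*h" by algebra
  have b1: "1 - a \<le> 2*h" using a2 hh e by linarith
  have b2: "0 \<le> 1 - a" using a1 assms by linarith
  have "(1 - a)^2 \<le> (2*h)^2" using b1 b2 by (rule power_mono)
  moreover have "2 * a * (1 - cos (Arg w)) \<le> h^2"
  proof -
    have "1 - cos (Arg w) \<le> (Arg w)^2 / 2" by (rule one_minus_cos_le)
    also have "\<dots> \<le> h^2 / 2" using power_mono[of "\<bar>Arg w\<bar>" h 2] z(3) by simp
    finally have "2 * a * (1 - cos (Arg w)) \<le> 2 * a * (h^2/2)" using a0 by (intro mult_left_mono) auto
    also have "\<dots> \<le> h^2" using a1 assms by (simp add: mult_left_le_one_le)
    finally show ?thesis .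
  qed
  ultimately have "D \<le> 5 * h^2" unfolding D_def den_sq(1)[OF w0] a_def[symmetric] by (simp add: power_mult_distrib)
  moreover have "h^2 \<le> D" unfolding D_def using den_ge[of "1-h" w] a1 assms unfolding a_def
    by (smt (verit) power_mono)
  moreover have h2: "0 < h^2" using assms by simp
  ultimately have "0 < D * h^2" by (metis mult_pos_pos order_less_le_trans)
  with \<open>D \<le> 5 * h^2\<close> h2 have "h^2 / (5 * h^2) \<le> h^2 / D"
    by (intro divide_left_mono) (auto simp: mult.commute)
  then show ?thesis using u_norm[OF assms(1-3), of z] assms unfolding D_def w_def by simp
qed

lemma u_upper:
  assumes "cmod \<xi> = 1" "0 < h" "h \<le> t" "t < 1" "cmod z \<le> 1" "z \<notin> window \<xi> t"
  shows "cmod (u_fun \<xi> (1 - h) z) \<le> 4 * h^2 / t^2"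
proof -
  define w where "w = z * cnj \<xi>"
  define a where "a = (1 - h) * cmod w"
  define D where "D = (cmod (1 - of_real (1 - h) * w))^2"
  have nw: "cmod w = cmod z" using assms unfolding w_def by (simp add: norm_mult)
  have a1: "a \<le> cmod z" unfolding a_def nw using assms by (intro mult_left_le_one_le) auto
  have a0: "0 \<le> a" unfolding a_def using assms by auto
  have "t^2 / 4 \<le> D"
  proof (cases "cmod z \<le> 1 - t")
    case True
    have "t^2 \<le> (1 - a)^2" using True a1 assms by (intro power_mono) auto
    also have "\<dots> \<le> D" unfolding D_def a_def using den_ge[of "1-h" w] assms a1 a0 nw True
      unfolding a_def by auto
    finally show ?thesis using zero_le_power2[of t] by linarith
  next
    case False
    then have th: "t \<le> \<bar>Arg w\<bar>" using assms unfolding window_def w_def by auto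
    have w0: "w \<noteq> 0" using False nw assms by auto
    have De: "D = (a - cos (Arg w))^2 + (sin (Arg w))^2"
      unfolding D_def den_sq(2)[OF w0] a_def ..
    show ?thesis
    proof (cases "cos (Arg w) \<le> 0")
      case True
      have "(cos (Arg w))^2 \<le> (a - cos (Arg w))^2"
        using power_mono[of "- cos (Arg w)" "a - cos (Arg w)" 2] True a0 by simp
      then have "1 \<le> D" unfolding De using sin_cos_squared_add[of "Arg w"] by linarith
      moreover have "t^2 \<le> 1" using assms by (simp add: power_le_one)
      ultimately show ?thesis by simp
    next
      case False
      have "t^2/4 \<le> (sin (Arg w))^2"
        using sin_sq_ge[of t "Arg w"] th False assms mpi_less_Arg[of w] Arg_le_pi[of w] by auto
      then show ?thesis unfolding De by (smt (verit) zero_le_power2)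
    qed
  qed
  moreover have t4: "0 < t^2 / 4" using assms by simp
  ultimately have "0 < D" by linarith
  then have "0 < D * (t^2/4)" using t4 by simp
  with \<open>t^2 / 4 \<le> D\<close> have "h^2 / D \<le> h^2 / (t^2 / 4)" by (intro divide_left_mono) auto
  then show ?thesis using u_norm[OF assms(1,2), of z] assms unfolding D_def w_def by (simp add: mult.commute)
qed

lemma Arg_borel[measurable]: "Arg \<in> borel_measurable borel"
proof -
  define F where "F = (\<lambda>x. if x \<in> - \<real>\<^sub>\<le>\<^sub>0 then Arg x else (0::real))"
  have F: "F \<in> borel_measurable borel" unfolding F_def
  proof (rule borel_measurable_continuous_on_if)
    show "(- \<real>\<^sub>\<le>\<^sub>0 :: complex set) \<in> sets borel" by (intro borel_open open_Compl closed_nonpos_Reals_complex)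
    show "continuous_on (- \<real>\<^sub>\<le>\<^sub>0) Arg" by (rule continuous_on_Arg)
    show "continuous_on (- (- \<real>\<^sub>\<le>\<^sub>0)) (\<lambda>x. 0::real)" by (rule continuous_on_const)
  qed
  have S: "\<real>\<^sub>\<le>\<^sub>0 - {0} \<in> sets (borel :: complex measure)"
    by (intro sets.Diff borel_closed closed_nonpos_Reals_complex closed_singleton)
  have "(\<lambda>x. if x \<in> \<real>\<^sub>\<le>\<^sub>0 - {0} then pi else F x) \<in> borel_measurable borel"
  proof (rule measurable_If_set)
    show "(\<lambda>x. pi) \<in> borel_measurable borel" by simp
    show "F \<in> borel_measurable borel" by (rule F)
    show "(\<real>\<^sub>\<le>\<^sub>0 - {0}) \<inter> space borel \<in> sets (borel :: complex measure)" using S by simp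
  qed
  moreover have "(\<lambda>x. if x \<in> \<real>\<^sub>\<le>\<^sub>0 - {0} then pi else F x) = Arg"
  proof
    fix x :: complex
    show "(if x \<in> \<real>\<^sub>\<le>\<^sub>0 - {0} then pi else F x) = Arg x"
    proof (cases "x \<in> \<real>\<^sub>\<le>\<^sub>0")
      case True
      then have xr: "x \<in> \<real>" and xre: "Re x \<le> 0" by (auto simp: nonpos_Reals_def)
      show ?thesis
      proof (cases "x = 0")
        case True
        then show ?thesis unfolding F_def by (simp add: Arg_zero)
      next
        case False
        then have "Re x < 0" using xr xre by (metis complex_is_Real_iff complex_eq_iff order_less_le zero_complex.simps)
        then have "Arg x = pi" using Arg_real[OF xr] by simp
        then show ?thesis using True False by simp
      qed
    next
      case False
      then show ?thesis unfolding F_def by simp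
    qed
  qed
  ultimately show ?thesis by simp
qed

locale orl_ctx =
  fixes P :: "real \<Rightarrow> real" and \<mu> :: "complex measure"
  assumes orl: "orlicz_function P" and fin: "finite_measure \<mu>"
    and sets_mu: "sets \<mu> = sets (restrict_space borel (cball (0::complex) 1))"
begin

lemma space_mu: "space \<mu> = cball 0 1"
  using sets_eq_imp_space_eq[OF sets_mu] by (simp add: space_restrict_space)

lemma window_sets: "window \<xi> h \<in> sets \<mu>"
proof -
  have "window \<xi> h \<in> sets borel" unfolding window_def by measurable
  moreover have "window \<xi> h \<subseteq> cball 0 1" unfolding window_def by auto
  ultimately show ?thesis unfolding sets_mu by (subst sets_restrict_space_iff) auto
qed

lemma emeas: "emeasure \<mu> A = ennreal (measure \<mu> A)"
  using finite_measure.emeasure_eq_measure[OF fin] .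

lemma meas_le: "measure \<mu> A \<le> measure \<mu> (space \<mu>)"
  using finite_measure.bounded_measure[OF fin] .

lemma lower_int:
  assumes "cmod \<xi> = 1" "0 < h" "h < 1" "0 < c"
    and I: "(\<integral>\<^sup>+z. ennreal (P (cmod (u_fun \<xi> (1 - h) z) / c)) \<partial>\<mu>) \<le> 1"
  shows "measure \<mu> (window \<xi> h) * P (1 / (5 * c)) \<le> 1"
proof -
  have "(\<integral>\<^sup>+z. ennreal (P (1 / (5 * c))) * indicator (window \<xi> h) z \<partial>\<mu>)
        \<le> (\<integral>\<^sup>+z. ennreal (P (cmod (u_fun \<xi> (1 - h) z) / c)) \<partial>\<mu>)"
  proof (rule nn_integral_mono)
    fix z assume "z \<in> space \<mu>"
    show "ennreal (P (1 / (5 * c))) * indicator (window \<xi> h) z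
          \<le> ennreal (P (cmod (u_fun \<xi> (1 - h) z) / c))"
    proof (cases "z \<in> window \<xi> h")
      case True
      have "(1/5) / c \<le> cmod (u_fun \<xi> (1 - h) z) / c"
        using u_lower[OF assms(1-3) True] assms(4) by (intro divide_right_mono) auto
      then have "1 / (5 * c) \<le> cmod (u_fun \<xi> (1 - h) z) / c" by simp
      then have "P (1 / (5 * c)) \<le> P (cmod (u_fun \<xi> (1 - h) z) / c)"
        using orl_mono[OF orl] assms(4) by simp
      then have "ennreal (P (1 / (5 * c))) \<le> ennreal (P (cmod (u_fun \<xi> (1 - h) z) / c))"
        by (rule ennreal_leI)
      then show ?thesis using True by simp
    qed simp
  qed
  also have "\<dots> \<le> 1" by (rule I)
  finally have "ennreal (P (1 / (5 * c))) * emeasure \<mu> (window \<xi> h) \<le> 1"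
    by (simp add: nn_integral_cmult_indicator window_sets)
  then have "ennreal (P (1 / (5 * c)) * measure \<mu> (window \<xi> h)) \<le> ennreal 1"
    by (simp add: emeas ennreal_mult'' orl_nonneg[OF orl] assms)
  then show ?thesis by (simp add: mult.commute)
qed

definition "c0 = max 1 (P 1 * measure \<mu> (space \<mu>))"

lemma c0_int:
  assumes "cmod \<xi> = 1" "0 < h" "h < 1"
  shows "(\<integral>\<^sup>+z. ennreal (P (cmod (u_fun \<xi> (1 - h) z) / c0)) \<partial>\<mu>) \<le> 1"
proof -
  have c1: "1 \<le> c0" unfolding c0_def by simp
  have "(\<integral>\<^sup>+z. ennreal (P (cmod (u_fun \<xi> (1 - h) z) / c0)) \<partial>\<mu>) \<le> (\<integral>\<^sup>+z. ennreal (P 1 / c0) \<partial>\<mu>)"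
  proof (rule nn_integral_mono)
    fix z assume "z \<in> space \<mu>"
    then have "cmod z \<le> 1" using space_mu by simp
    then have "cmod (u_fun \<xi> (1 - h) z) / c0 \<le> 1 / c0"
      using u_le_one[OF assms] c1 by (simp add: divide_right_mono)
    then have "P (cmod (u_fun \<xi> (1 - h) z) / c0) \<le> P (1 / c0)"
      using orl_mono[OF orl] c1 by simp
    also have "\<dots> \<le> 1 / c0 * P 1" using orl_sub[OF orl, of "1/c0" 1] c1 by simp
    finally show "ennreal (P (cmod (u_fun \<xi> (1 - h) z) / c0)) \<le> ennreal (P 1 / c0)" by (intro ennreal_leI) simp
  qed
  also have "\<dots> = ennreal (P 1 / c0) * ennreal (measure \<mu> (space \<mu>))"
    by (simp add: emeas)
  also have "\<dots> = ennreal (P 1 / c0 * measure \<mu> (space \<mu>))"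
    by (rule ennreal_mult[symmetric]) (use c1 orl_nonneg[OF orl, of 1] in auto)
  also have "\<dots> \<le> ennreal 1"
  proof -
    have "P 1 * measure \<mu> (space \<mu>) \<le> c0" unfolding c0_def by simp
    then show ?thesis using c1 by (simp add: field_simps)
  qed
  finally show ?thesis by simp
qed

lemma norm_set_ne:
  assumes "cmod \<xi> = 1" "0 < h" "h < 1"
  shows "c0 \<in> {C. C > 0 \<and> (\<integral>\<^sup>+ x. ennreal (P (norm (u_fun \<xi> (1 - h) x) / C)) \<partial>\<mu>) \<le> 1}"
  using c0_int[OF assms] unfolding c0_def by auto

lemma norm_nonneg':
  assumes "cmod \<xi> = 1" "0 < h" "h < 1"
  shows "0 \<le> orlicz_norm P \<mu> (u_fun \<xi> (1 - h))" "orlicz_norm P \<mu> (u_fun \<xi> (1 - h)) \<le> c0"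
proof -
  let ?S = "{C. C > 0 \<and> (\<integral>\<^sup>+ x. ennreal (P (norm (u_fun \<xi> (1 - h) x) / C)) \<partial>\<mu>) \<le> 1}"
  have bb: "bdd_below ?S" by (rule bdd_belowI[where m=0]) auto
  show "0 \<le> orlicz_norm P \<mu> (u_fun \<xi> (1 - h))" unfolding orlicz_norm_def
    using norm_set_ne[OF assms] by (intro cInf_greatest) auto
  show "orlicz_norm P \<mu> (u_fun \<xi> (1 - h)) \<le> c0" unfolding orlicz_norm_def
    using norm_set_ne[OF assms] bb by (intro cInf_lower) auto
qed

lemma norm_le_intro:
  assumes "0 < C" "(\<integral>\<^sup>+ x. ennreal (P (norm (f x) / C)) \<partial>\<mu>) \<le> 1"
  shows "orlicz_norm P \<mu> f \<le> C"
proof -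
  let ?S = "{C. C > 0 \<and> (\<integral>\<^sup>+ x. ennreal (P (norm (f x) / C)) \<partial>\<mu>) \<le> 1}"
  have bb: "bdd_below ?S" by (rule bdd_belowI[where m=0]) auto
  show ?thesis unfolding orlicz_norm_def
    using assms bb by (intro cInf_lower) auto
qed

lemma norm_le_dest:
  assumes "cmod \<xi> = 1" "0 < h" "h < 1" "0 < N" "orlicz_norm P \<mu> (u_fun \<xi> (1 - h)) \<le> N"
  shows "(\<integral>\<^sup>+ x. ennreal (P (norm (u_fun \<xi> (1 - h) x) / (2 * N))) \<partial>\<mu>) \<le> 1"
proof -
  let ?S = "{C. C > 0 \<and> (\<integral>\<^sup>+ x. ennreal (P (norm (u_fun \<xi> (1 - h) x) / C)) \<partial>\<mu>) \<le> 1}"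
  have "Inf ?S \<le> N" using assms(5) unfolding orlicz_norm_def .
  then have lt: "Inf ?S < 2 * N" using assms(4) by linarith
  have ne: "?S \<noteq> {}" using norm_set_ne[OF assms(1-3)] by (intro notI) (simp only: empty_iff)
  obtain c where c: "c \<in> ?S" "c < 2 * N" using cInf_lessD[OF ne lt] by (elim bexE)
  have c0': "0 < c" using c(1) by simp
  have "(\<integral>\<^sup>+ x. ennreal (P (norm (u_fun \<xi> (1 - h) x) / (2 * N))) \<partial>\<mu>)
      \<le> (\<integral>\<^sup>+ x. ennreal (P (norm (u_fun \<xi> (1 - h) x) / c)) \<partial>\<mu>)"
  proof (rule nn_integral_mono)
    fix x
    have "norm (u_fun \<xi> (1 - h) x) / (2 * N) \<le> norm (u_fun \<xi> (1 - h) x) / c"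
      using c0' c(2) by (intro divide_left_mono) auto
    then show "ennreal (P (norm (u_fun \<xi> (1 - h) x) / (2 * N))) \<le> ennreal (P (norm (u_fun \<xi> (1 - h) x) / c))"
      by (intro ennreal_leI orl_mono[OF orl]) (use c0' assms(4) in simp_all)
  qed
  also have "\<dots> \<le> 1"
  proof -
    from c(1) have "0 < c \<and> (\<integral>\<^sup>+ x. ennreal (P (norm (u_fun \<xi> (1 - h) x) / c)) \<partial>\<mu>) \<le> 1" by (rule CollectD)
    then show ?thesis by (rule conjunct2)
  qed
  finally show ?thesis .
qed

end

lemma K_exists:
  fixes h d :: real
  assumes "0 < h" "h < d"
  shows "\<exists>K. 2^K * h < d \<and> d \<le> 2^(Suc K) * h"
proof -
  obtain n where n: "d / h < 2^n" using real_arch_pow[of 2 "d/h"] by auto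
  have ex: "\<exists>n. d \<le> 2^(Suc n) * h"
  proof
    have "d / h < 2 ^ Suc n" using n by (smt (verit) one_le_power power_Suc2 mult_le_cancel_left1 zero_le_power)
    then show "d \<le> 2^(Suc n) * h" using assms by (simp add: divide_less_eq less_imp_le)
  qed
  define K where "K = (LEAST n. d \<le> 2^(Suc n) * h)"
  have K1: "d \<le> 2^(Suc K) * h" unfolding K_def using ex by (rule LeastI_ex)
  have K2: "2^K * h < d"
  proof (cases K)
    case 0
    then show ?thesis using assms by simp
  next
    case (Suc m)
    then have "m < K" by simp
    then have "\<not> d \<le> 2^(Suc m) * h" unfolding K_def by (rule not_less_Least)
    then show ?thesis using Suc by simp
  qed
  show ?thesis using K1 K2 by blast
qed

lemma u_dyadic:
  assumes "cmod \<xi> = 1" "0 < h" "2^m * h < 1" "cmod z \<le> 1" "z \<notin> window \<xi> (2^m * h)"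
  shows "cmod (u_fun \<xi> (1 - h) z) \<le> 16 / 4^(Suc m)"
proof -
  have hm: "h \<le> 2^m * h" using assms by simp
  have "cmod (u_fun \<xi> (1 - h) z) \<le> 4 * h^2 / (2^m * h)^2"
    by (rule u_upper[OF assms(1,2) hm assms(3,4,5)])
  also have "\<dots> = 16 / 4^(Suc m)"
  proof -
    have f: "(4::real)^m = 2^m * 2^m" using power_mult_distrib[of "2::real" 2 m] by simp
    show ?thesis using assms(2) unfolding f by (simp add: power2_eq_square field_simps) (metis f)
  qed
  finally show ?thesis .
qed

lemma geo_sum: "(\<Sum>k\<le>K. (1/2::real)^k / 4) \<le> 1/2"
proof -
  have s1: "(\<Sum>k\<le>K. (1/2::real)^k) = 2 - 2 * (1/2)^(Suc K)"
    by (induction K) (auto simp: field_simps)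
  have s2: "(\<Sum>k\<le>K. (1/2::real)^k / 4) = (\<Sum>k\<le>K. (1/2::real)^k) / 4"
    by (simp add: sum_divide_distrib)
  have pos: "0 \<le> (1/2::real)^(Suc K)" by simp
  have gen: "\<And>q::real. 0 \<le> q \<Longrightarrow> (2 - 2*q)/4 \<le> 1/2" by simp
  show ?thesis unfolding s2 s1 by (rule gen[OF pos])
qed

context orl_ctx
begin

lemma term_bound:
  assumes "0 < h" "0 < A" "0 < C" "64 / A \<le> C" "0 < t" "t = 2^k * h"
    and carl: "measure \<mu> (window \<xi> t) * P (A * orlicz_inv P (1 / t)) \<le> 1"
  shows "P (16 / 4^k * orlicz_inv P (1/h) / C) * measure \<mu> (window \<xi> t) \<le> (1/2)^k / 4"
proof -
  define y where "y = orlicz_inv P (1/h)"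
  have y0: "0 < y" unfolding y_def using orl_inv_pos[OF orl] assms by simp
  define x where "x = A * y / 2^k"
  have x0: "0 \<le> x" unfolding x_def using y0 assms by simp
  define m where "m = measure \<mu> (window \<xi> t)"
  have m0: "0 \<le> m" unfolding m_def by simp
  have "(1/2^k) * y \<le> orlicz_inv P ((1/2^k) * (1/h))"
    unfolding y_def by (rule orl_inv_super[OF orl]) (use assms in auto)
  also have "(1/2^k) * (1/h) = 1 / t" using assms by simp
  finally have le: "(1/2^k) * y \<le> orlicz_inv P (1/t)" .
  have "x \<le> A * orlicz_inv P (1/t)" unfolding x_def using mult_left_mono[OF le, of A] assms
    by simp
  then have "P x \<le> P (A * orlicz_inv P (1/t))" using orl_mono[OF orl] x0 by simp
  then have mx: "m * P x \<le> 1" using carl m0 unfolding m_def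
    by (smt (verit) mult_left_mono)
  have "16 / 4^k * y / C \<le> (1 / (4 * 2^k)) * x"
  proof -
    have "16 / C \<le> A / 4" using assms by (simp add: field_simps)
    then have "16 / C * (y / 4^k) \<le> A / 4 * (y / 4^k)" using y0 by (intro mult_right_mono) auto
    moreover have "(4::real)^k = 2^k * 2^k" using power_mult_distrib[of "2::real" 2 k] by simp
    ultimately show ?thesis unfolding x_def by (simp add: field_simps)
  qed
  then have "P (16 / 4^k * y / C) \<le> P ((1 / (4 * 2^k)) * x)"
    using orl_mono[OF orl] y0 assms by simp
  also have "\<dots> \<le> (1 / (4 * 2^k)) * P x"
  proof (rule orl_sub[OF orl])
    have a: "(1::real) \<le> 4 * 2^k" using one_le_power[of "2::real" k] by linarith
    have "1 / (4 * 2 ^ k) \<le> (1::real) / 1" by (rule divide_left_mono) (use a in auto)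
    then show "1 / (4 * 2 ^ k) \<le> (1::real)" by simp
  qed (use x0 in auto)
  finally have "P (16 / 4^k * y / C) * m \<le> (1 / (4 * 2^k)) * P x * m"
    using m0 by (intro mult_right_mono) auto
  also have "\<dots> = (1 / (4 * 2^k)) * (m * P x)" by simp
  also have "\<dots> \<le> (1 / (4 * 2^k))" using mx by (simp add: divide_right_mono)
  also have "\<dots> = (1/2)^k / 4" by (simp add: power_divide)
  finally show ?thesis unfolding y_def m_def .
qed

end

context orl_ctx
begin

lemma rem_bound:
  assumes "0 < h" "h \<le> 1" "0 < d" "d \<le> 2^(Suc K) * h" "0 < C" "16 * h / (d^2 * C) \<le> 1"
  shows "P (16 / 4^(Suc K) * orlicz_inv P (1/h) / C) \<le> 16 * h / (d^2 * C)"
proof -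
  define y where "y = orlicz_inv P (1/h)"
  define i1 where "i1 = orlicz_inv P 1"
  define q where "q = (4::real)^(Suc K)"
  have y0: "0 < y" unfolding y_def using orl_inv_pos[OF orl] assms by simp
  have i0: "0 < i1" unfolding i1_def using orl_inv_pos[OF orl] by simp
  have Pi: "P i1 = 1" unfolding i1_def using orl_inv(2)[OF orl, of 1] by simp
  have hy: "h * y \<le> i1"
  proof -
    have "h * y \<le> orlicz_inv P (h * (1/h))" unfolding y_def
      by (rule orl_inv_super[OF orl]) (use assms in auto)
    then show ?thesis unfolding i1_def using assms by simp
  qed
  have q: "q = (2^(Suc K))^2" unfolding q_def using power_mult_distrib[of "2::real" 2 "Suc K"]
    by (simp add: power2_eq_square)
  have dq: "d^2 \<le> q * h^2"
  proof -
    have "d^2 \<le> (2^(Suc K) * h)^2" using assms by (intro power_mono) auto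
    then show ?thesis unfolding q by (simp add: power_mult_distrib)
  qed
  have q0: "0 < q" unfolding q_def by simp
  have "y * d^2 \<le> y * (q * h^2)" using dq y0 by (intro mult_left_mono) auto
  also have "\<dots> = (h * y) * (q * h)" by (simp add: power2_eq_square)
  also have "\<dots> \<le> i1 * (q * h)" using hy q0 assms by (intro mult_right_mono) auto
  finally have main: "y * d^2 \<le> i1 * (q * h)" .
  have "16 / q * y / C \<le> 16 * h / (d^2 * C) * i1"
    using main q0 assms by (simp add: field_simps)
  then have "P (16 / q * y / C) \<le> P (16 * h / (d^2 * C) * i1)"
    using orl_mono[OF orl] y0 q0 assms by simp
  also have "\<dots> \<le> 16 * h / (d^2 * C) * P i1"
    by (rule orl_sub[OF orl]) (use assms i0 in auto)
  finally show ?thesis unfolding y_def q_def Pi by simp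
qed

end

context orl_ctx
begin

lemma upper_int:
  assumes xi: "cmod \<xi> = 1" and h: "0 < h" "h < d" and d1: "d \<le> 1" and A: "0 < A"
    and C: "0 < C" "64 / A \<le> C"
    and carl: "\<And>t. 0 < t \<Longrightarrow> t < d \<Longrightarrow> measure \<mu> (window \<xi> t) * P (A * orlicz_inv P (1/t)) \<le> 1"
    and r1: "16 * h / (d^2 * C) \<le> 1" and r2: "16 * h / (d^2 * C) * measure \<mu> (space \<mu>) \<le> 1/2"
  shows "(\<integral>\<^sup>+z. ennreal (P (cmod (u_fun \<xi> (1 - h) z) / (C / orlicz_inv P (1/h)))) \<partial>\<mu>) \<le> 1"
proof -
  define y where "y = orlicz_inv P (1/h)"
  have y0: "0 < y" unfolding y_def using orl_inv_pos[OF orl] h by simp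
  obtain K where K1: "2^K * h < d" and K2: "d \<le> 2^(Suc K) * h" using K_exists[OF h] by blast
  define a where "a k = P (16 / 4^k * y / C)" for k :: nat
  define W where "W k = window \<xi> (2^k * h)" for k :: nat
  define M where "M = measure \<mu> (space \<mu>)"
  have a0: "0 \<le> a k" for k unfolding a_def using y0 C by (intro orl_nonneg[OF orl]) auto
  have d0: "0 < d" using h by simp
  have hb: "P (cmod (u_fun \<xi> (1 - h) z) / (C / y)) \<le> a k"
    if "cmod (u_fun \<xi> (1 - h) z) \<le> 16 / 4^k" for z k
  proof -
    have "cmod (u_fun \<xi> (1 - h) z) / (C / y) = cmod (u_fun \<xi> (1 - h) z) * y / C" by simp
    also have "\<dots> \<le> 16 / 4^k * y / C" using that y0 C
      by (intro divide_right_mono mult_right_mono) auto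
    finally show ?thesis unfolding a_def by (intro orl_mono[OF orl]) (use y0 C in auto)
  qed
  have small: "2^m * h < 1" if "m \<le> K" for m
  proof -
    have "(2::real)^m \<le> 2^K" using that by (intro power_increasing) auto
    then have "2^m * h \<le> 2^K * h" using h by (intro mult_right_mono) auto
    then show ?thesis using K1 d1 by linarith
  qed
  have pw: "ennreal (P (cmod (u_fun \<xi> (1 - h) z) / (C / y)))
      \<le> (\<Sum>k\<le>K. ennreal (a k) * indicator (W k) z) + ennreal (a (Suc K))"
    if zs: "z \<in> space \<mu>" for z
  proof -
    have zc: "cmod z \<le> 1" using zs space_mu by simp
    show ?thesis
    proof (cases "\<exists>k\<le>K. z \<in> W k")
      case True
      define k0 where "k0 = (LEAST k. k \<le> K \<and> z \<in> W k)"
      have k0: "k0 \<le> K" "z \<in> W k0" unfolding k0_def using True LeastI_ex[of "\<lambda>k. k \<le> K \<and> z \<in> W k"] by auto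
      have ub: "cmod (u_fun \<xi> (1 - h) z) \<le> 16 / 4^k0"
      proof (cases k0)
        case 0
        then show ?thesis using u_le_one[OF xi h(1) _ zc] h d1 by simp
      next
        case (Suc m)
        then have "m < k0" by simp
        then have "\<not> (m \<le> K \<and> z \<in> W m)" unfolding k0_def by (rule not_less_Least)
        then have "z \<notin> W m" using Suc k0 by simp
        then show ?thesis using u_dyadic[OF xi h(1) small zc] Suc k0 unfolding W_def by simp
      qed
      have "ennreal (P (cmod (u_fun \<xi> (1 - h) z) / (C / y))) \<le> ennreal (a k0)"
        using hb[OF ub] by (rule ennreal_leI)
      also have "\<dots> = ennreal (a k0) * indicator (W k0) z" using k0 by simp
      also have "\<dots> \<le> (\<Sum>k\<le>K. ennreal (a k) * indicator (W k) z)"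
        by (rule member_le_sum) (use k0 in auto)
      also have "\<dots> \<le> (\<Sum>k\<le>K. ennreal (a k) * indicator (W k) z) + ennreal (a (Suc K))"
        by simp
      finally show ?thesis .
    next
      case False
      then have "z \<notin> W K" by auto
      then have "cmod (u_fun \<xi> (1 - h) z) \<le> 16 / 4^(Suc K)"
        using u_dyadic[OF xi h(1) small[of K] zc] unfolding W_def by simp
      then have "ennreal (P (cmod (u_fun \<xi> (1 - h) z) / (C / y))) \<le> ennreal (a (Suc K))"
        using hb by (intro ennreal_leI) auto
      also have "\<dots> \<le> (\<Sum>k\<le>K. ennreal (a k) * indicator (W k) z) + ennreal (a (Suc K))"
        by simp
      finally show ?thesis .
    qed
  qed
  have Wm: "W k \<in> sets \<mu>" for k unfolding W_def by (rule window_sets)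
  have meas: "(\<lambda>z. \<Sum>k\<le>K. ennreal (a k) * indicator (W k) z) \<in> borel_measurable \<mu>"
    using Wm by measurable
  have "(\<integral>\<^sup>+z. ennreal (P (cmod (u_fun \<xi> (1 - h) z) / (C / y))) \<partial>\<mu>)
      \<le> (\<integral>\<^sup>+z. (\<Sum>k\<le>K. ennreal (a k) * indicator (W k) z) + ennreal (a (Suc K)) \<partial>\<mu>)"
    by (rule nn_integral_mono) (rule pw)
  also have "\<dots> = (\<integral>\<^sup>+z. (\<Sum>k\<le>K. ennreal (a k) * indicator (W k) z) \<partial>\<mu>) + (\<integral>\<^sup>+z. ennreal (a (Suc K)) \<partial>\<mu>)"
    by (rule nn_integral_add) (use meas in auto)
  also have "(\<integral>\<^sup>+z. (\<Sum>k\<le>K. ennreal (a k) * indicator (W k) z) \<partial>\<mu>) = (\<Sum>k\<le>K. (\<integral>\<^sup>+z. ennreal (a k) * indicator (W k) z \<partial>\<mu>))"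
  proof (rule nn_integral_sum)
    fix k show "(\<lambda>z. ennreal (a k) * indicator (W k) z) \<in> borel_measurable \<mu>" using Wm by measurable
  qed
  also have "\<dots> = (\<Sum>k\<le>K. ennreal (a k) * emeasure \<mu> (W k))"
    by (intro sum.cong refl nn_integral_cmult_indicator Wm)
  also have "\<dots> = (\<Sum>k\<le>K. ennreal (a k * measure \<mu> (W k)))"
    using a0 by (intro sum.cong refl) (simp add: emeas ennreal_mult)
  also have "\<dots> = ennreal (\<Sum>k\<le>K. a k * measure \<mu> (W k))"
    using a0 by (intro sum_ennreal) simp
  also have "(\<integral>\<^sup>+z. ennreal (a (Suc K)) \<partial>\<mu>) = ennreal (a (Suc K) * M)"
    using a0 unfolding M_def by (simp add: emeas ennreal_mult)
  also have "ennreal (\<Sum>k\<le>K. a k * measure \<mu> (W k)) + ennreal (a (Suc K) * M)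
      = ennreal ((\<Sum>k\<le>K. a k * measure \<mu> (W k)) + a (Suc K) * M)"
    using a0 unfolding M_def by (intro ennreal_plus[symmetric] sum_nonneg mult_nonneg_nonneg) auto
  also have "\<dots> \<le> ennreal 1"
  proof (rule ennreal_leI)
    have "(\<Sum>k\<le>K. a k * measure \<mu> (W k)) \<le> (\<Sum>k\<le>K. (1/2::real)^k / 4)"
    proof (rule sum_mono)
      fix k assume "k \<in> {..K}"
      then have kK: "k \<le> K" by simp
      have "2^k * h < d" using small[OF kK] K1 power_increasing[OF kK, of "2::real"] h
        by (smt (verit) mult_right_mono)
      then show "a k * measure \<mu> (W k) \<le> (1/2)^k / 4"
        unfolding a_def W_def y_def
        by (intro term_bound[OF h(1) A C(1) C(2) _ refl] carl) (use h in auto)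
    qed
    also have "\<dots> \<le> 1/2" by (rule geo_sum)
    finally have s1: "(\<Sum>k\<le>K. a k * measure \<mu> (W k)) \<le> 1/2" .
    have "a (Suc K) \<le> 16 * h / (d^2 * C)" unfolding a_def y_def
      by (rule rem_bound[OF h(1) _ d0 K2 C(1) r1]) (use h d1 in auto)
    then have "a (Suc K) * M \<le> 16 * h / (d^2 * C) * M" unfolding M_def by (intro mult_right_mono) auto
    then have s2: "a (Suc K) * M \<le> 1/2" using r2 unfolding M_def by linarith
    show "(\<Sum>k\<le>K. a k * measure \<mu> (W k)) + a (Suc K) * M \<le> 1" using s1 s2 by linarith
  qed
  finally show ?thesis unfolding y_def by simp
qed

end

context orl_ctx
begin

lemma sphere_iff: "\<xi> \<in> sphere (0::complex) 1 \<longleftrightarrow> cmod \<xi> = 1" by simp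

lemma P1a:
  assumes "psi_carleson P \<mu>"
  shows "\<exists>C\<ge>1. \<forall>\<xi>\<in>sphere 0 1. \<forall>h\<in>{0<..<1}.
              orlicz_norm P \<mu> (u_fun \<xi> (1 - h)) \<le> C / orlicz_inv P (1 / h)"
proof -
  obtain A where A: "A > 0" and car: "\<And>\<xi> h. \<xi> \<in> sphere 0 1 \<Longrightarrow> h \<in> {0<..<1} \<Longrightarrow>
      measure \<mu> (window \<xi> h) \<le> 1 / P (A * orlicz_inv P (1 / h))"
    using assms unfolding psi_carleson_def by blast
  define M where "M = measure \<mu> (space \<mu>)"
  have M0: "0 \<le> M" unfolding M_def by simp
  define C where "C = max 1 (max (64/A) (32*M + 16))"
  have C: "1 \<le> C" "64/A \<le> C" "32*M + 16 \<le> C" unfolding C_def by auto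
  have "\<forall>\<xi>\<in>sphere 0 1. \<forall>h\<in>{0<..<1}. orlicz_norm P \<mu> (u_fun \<xi> (1 - h)) \<le> C / orlicz_inv P (1 / h)"
  proof (intro ballI)
    fix \<xi> :: complex and h :: real
    assume xi: "\<xi> \<in> sphere 0 1" and h: "h \<in> {0<..<1}"
    have y0: "0 < orlicz_inv P (1/h)" using orl_inv_pos[OF orl] h by simp
    have carl: "measure \<mu> (window \<xi> t) * P (A * orlicz_inv P (1/t)) \<le> 1" if "0 < t" "t < 1" for t
    proof -
      have "0 < P (A * orlicz_inv P (1/t))" using orl_pos[OF orl] orl_inv_pos[OF orl, of "1/t"] A that by simp
      then show ?thesis using car[OF xi, of t] that by (simp add: le_divide_eq)
    qed
    have r1: "16 * h / (1^2 * C) \<le> 1" using h C M0 by (simp add: field_simps)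
    have r2: "16 * h / (1^2 * C) * measure \<mu> (space \<mu>) \<le> 1/2"
    proof -
      have "h * M \<le> 1 * M" using h M0 by (intro mult_right_mono) auto
      then have "16 * h * M \<le> 16 * M" by simp
      also have "\<dots> \<le> C / 2" using C by simp
      finally show ?thesis using C unfolding M_def by (simp add: field_simps)
    qed
    have "(\<integral>\<^sup>+z. ennreal (P (cmod (u_fun \<xi> (1 - h) z) / (C / orlicz_inv P (1/h)))) \<partial>\<mu>) \<le> 1"
      by (rule upper_int[of \<xi> h 1 A C]) (use xi h A C carl r1 r2 in auto)
    then show "orlicz_norm P \<mu> (u_fun \<xi> (1 - h)) \<le> C / orlicz_inv P (1 / h)"
      by (intro norm_le_intro) (use C y0 in auto)
  qed
  then show ?thesis using C by blast
qed

lemma P1b: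
  assumes "\<exists>C\<ge>1. \<forall>\<xi>\<in>sphere 0 1. \<forall>h\<in>{0<..<1}.
              orlicz_norm P \<mu> (u_fun \<xi> (1 - h)) \<le> C / orlicz_inv P (1 / h)"
  shows "psi_carleson P \<mu>"
proof -
  obtain C where C: "1 \<le> C" and nb: "\<And>\<xi> h. \<xi> \<in> sphere 0 1 \<Longrightarrow> h \<in> {0<..<1} \<Longrightarrow>
      orlicz_norm P \<mu> (u_fun \<xi> (1 - h)) \<le> C / orlicz_inv P (1 / h)"
    using assms by blast
  define A where "A = 1 / (10 * C)"
  have A0: "A > 0" unfolding A_def using C by simp
  have "\<forall>\<xi>\<in>sphere 0 1. \<forall>h\<in>{0<..<1}. measure \<mu> (window \<xi> h) \<le> 1 / P (A * orlicz_inv P (1 / h))"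
  proof (intro ballI)
    fix \<xi> :: complex and h :: real
    assume xi: "\<xi> \<in> sphere 0 1" and h: "h \<in> {0<..<1}"
    define y where "y = orlicz_inv P (1/h)"
    have y0: "0 < y" unfolding y_def using orl_inv_pos[OF orl] h by simp
    have xi1: "cmod \<xi> = 1" using xi by simp
    have N0: "0 < C / y" using C y0 by simp
    have I: "(\<integral>\<^sup>+ x. ennreal (P (norm (u_fun \<xi> (1 - h) x) / (2 * (C / y)))) \<partial>\<mu>) \<le> 1"
      by (rule norm_le_dest[OF xi1 _ _ N0]) (use h nb[OF xi h] in \<open>auto simp: y_def\<close>)
    have "measure \<mu> (window \<xi> h) * P (1 / (5 * (2 * (C / y)))) \<le> 1"
      by (rule lower_int[OF xi1 _ _ _ I]) (use h N0 in auto)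
    moreover have "1 / (5 * (2 * (C / y))) = A * y" unfolding A_def using C y0 by (simp add: field_simps)
    moreover have "0 < P (A * y)" using orl_pos[OF orl] A0 y0 by simp
    ultimately show "measure \<mu> (window \<xi> h) \<le> 1 / P (A * orlicz_inv P (1 / h))"
      unfolding y_def by (simp add: le_divide_eq)
  qed
  then show ?thesis unfolding psi_carleson_def using A0 by blast
qed

end

context orl_ctx
begin

lemma rho_ge: "\<xi> \<in> sphere 0 1 \<Longrightarrow> measure \<mu> (window \<xi> h) \<le> rho \<mu> h"
  unfolding rho_def by (rule cSUP_upper) (auto intro!: bdd_aboveI2[where M="measure \<mu> (space \<mu>)"] meas_le)

lemma rho_nonneg: "0 \<le> rho \<mu> h"
proof -
  have "(1::complex) \<in> sphere 0 1" by simp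
  then show ?thesis using rho_ge[of 1 h] by (smt (verit) measure_nonneg)
qed

lemma rho_le: "(\<And>\<xi>. \<xi> \<in> sphere 0 1 \<Longrightarrow> measure \<mu> (window \<xi> h) \<le> B) \<Longrightarrow> rho \<mu> h \<le> B"
  unfolding rho_def by (rule cSUP_least) auto

lemma P2a:
  assumes "vanishing_psi_carleson P \<mu>"
  shows "((\<lambda>h. SUP \<xi>\<in>sphere 0 1. orlicz_inv P (1 / h) * orlicz_norm P \<mu> (u_fun \<xi> (1 - h))) \<longlongrightarrow> 0) (at_right 0)"
proof (rule tendstoI)
  fix \<epsilon> :: real assume e0: "0 < \<epsilon>"
  define e where "e = \<epsilon> / 2"
  have e: "0 < e" "e < \<epsilon>" using e0 unfolding e_def by auto
  define A where "A = 64 / e"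
  have A: "0 < A" "64 / A = e" using e unfolding A_def by auto
  have "((\<lambda>h. P (A * orlicz_inv P (1 / h)) * rho \<mu> h) \<longlongrightarrow> 0) (at_right 0)"
    using assms A unfolding vanishing_psi_carleson_def by blast
  then have "eventually (\<lambda>h. dist (P (A * orlicz_inv P (1 / h)) * rho \<mu> h) 0 < 1) (at_right 0)"
    by (rule tendstoD) simp
  then obtain b where b: "b > 0" and bb: "\<And>t. 0 < t \<Longrightarrow> t < b \<Longrightarrow> dist (P (A * orlicz_inv P (1 / t)) * rho \<mu> t) 0 < 1"
    unfolding eventually_at_right_field by auto
  define d where "d = min b 1"
  have d: "0 < d" "d \<le> 1" "d \<le> b" unfolding d_def using b by auto
  define M where "M = measure \<mu> (space \<mu>)"
  have M0: "0 \<le> M" unfolding M_def by simp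
  have carl: "measure \<mu> (window \<xi> t) * P (A * orlicz_inv P (1/t)) \<le> 1"
    if xi: "\<xi> \<in> sphere 0 1" and t: "0 < t" "t < d" for \<xi> t
  proof -
    have P0: "0 \<le> P (A * orlicz_inv P (1/t))" using orl_nonneg[OF orl] orl_inv(1)[OF orl, of "1/t"] A t by simp
    have "measure \<mu> (window \<xi> t) * P (A * orlicz_inv P (1/t)) \<le> rho \<mu> t * P (A * orlicz_inv P (1/t))"
      using rho_ge[OF xi] P0 by (intro mult_right_mono) auto
    also have "\<dots> \<le> 1" using bb[of t] t d rho_nonneg[of t] P0 by (simp add: mult.commute)
    finally show ?thesis .
  qed
  define h0 where "h0 = d^2 * e / (32 * (M + 1))"
  have h0: "0 < h0" unfolding h0_def using d e M0 by simp
  show "eventually (\<lambda>h. dist (SUP \<xi>\<in>sphere 0 1. orlicz_inv P (1 / h) * orlicz_norm P \<mu> (u_fun \<xi> (1 - h))) 0 < \<epsilon>) (at_right 0)"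
    unfolding eventually_at_right_field
  proof (intro exI[of _ "min d h0"] conjI allI impI)
    show "0 < min d h0" using d h0 by simp
    fix h :: real assume h: "0 < h" "h < min d h0"
    have hd: "h < d" "h < 1" using h d by auto
    define y where "y = orlicz_inv P (1/h)"
    have y0: "0 < y" unfolding y_def using orl_inv_pos[OF orl] h by simp
    have hM: "h * (32 * (M + 1)) < d^2 * e" using h unfolding h0_def using M0
      by (simp add: field_simps)
    have de: "0 < d^2 * e" using d e by simp
    have hM': "h * 32 + h * 32 * M < d^2 * e" using hM by (simp add: algebra_simps)
    have "0 \<le> h * 32 * M" using h M0 by simp
    then have "16 * h \<le> d^2 * e" using hM' h by linarith
    then have r1: "16 * h / (d^2 * e) \<le> 1" using de by (simp add: field_simps)
    have r2: "16 * h / (d^2 * e) * measure \<mu> (space \<mu>) \<le> 1/2"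
    proof -
      have "h * M \<le> h * (M + 1)" using h by simp
      then have "16 * h * M * 2 \<le> d^2 * e" using hM by linarith
      then show ?thesis using de unfolding M_def[symmetric] by (simp add: field_simps)
    qed
    have each: "y * orlicz_norm P \<mu> (u_fun \<xi> (1 - h)) \<le> e" if xi: "\<xi> \<in> sphere 0 1" for \<xi>
    proof -
      have xi1: "cmod \<xi> = 1" using xi by simp
      have "(\<integral>\<^sup>+z. ennreal (P (cmod (u_fun \<xi> (1 - h) z) / (e / orlicz_inv P (1/h)))) \<partial>\<mu>) \<le> 1"
        by (rule upper_int[OF xi1 h(1) hd(1) d(2) A(1) e(1)]) (use A carl[OF xi] r1 r2 in auto)
      then have "orlicz_norm P \<mu> (u_fun \<xi> (1 - h)) \<le> e / y"
        unfolding y_def by (intro norm_le_intro) (use e y0 y_def in auto)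
      then show ?thesis using y0 by (simp add: field_simps)
    qed
    have sup_le: "(SUP \<xi>\<in>sphere 0 1. y * orlicz_norm P \<mu> (u_fun \<xi> (1 - h))) \<le> e"
      by (rule cSUP_least) (use each in auto)
    have "(1::complex) \<in> sphere 0 1" by simp
    then have "y * orlicz_norm P \<mu> (u_fun 1 (1 - h)) \<le> (SUP \<xi>\<in>sphere 0 1. y * orlicz_norm P \<mu> (u_fun \<xi> (1 - h)))"
      by (intro cSUP_upper bdd_aboveI2[where M=e]) (use each in auto)
    moreover have "0 \<le> y * orlicz_norm P \<mu> (u_fun 1 (1 - h))"
      using norm_nonneg'(1)[of 1 h] y0 hd h by simp
    ultimately have "0 \<le> (SUP \<xi>\<in>sphere 0 1. y * orlicz_norm P \<mu> (u_fun \<xi> (1 - h)))" by linarith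
    then show "dist (SUP \<xi>\<in>sphere 0 1. orlicz_inv P (1 / h) * orlicz_norm P \<mu> (u_fun \<xi> (1 - h))) 0 < \<epsilon>"
      using sup_le e unfolding y_def by simp
  qed
qed

end

context orl_ctx
begin

lemma P2b:
  assumes lim: "((\<lambda>h. SUP \<xi>\<in>sphere 0 1. orlicz_inv P (1 / h) * orlicz_norm P \<mu> (u_fun \<xi> (1 - h))) \<longlongrightarrow> 0) (at_right 0)"
  shows "vanishing_psi_carleson P \<mu>"
  unfolding vanishing_psi_carleson_def
proof (intro allI impI)
  fix A :: real assume A: "0 < A"
  show "((\<lambda>h. P (A * orlicz_inv P (1 / h)) * rho \<mu> h) \<longlongrightarrow> 0) (at_right 0)"
  proof (rule tendstoI)
    fix \<epsilon> :: real assume e0: "0 < \<epsilon>"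
    define \<eta> where "\<eta> = min (1 / (10 * A)) (\<epsilon> / (20 * A))"
    have et1: "\<eta> \<le> 1 / (10 * A)" and et2: "\<eta> \<le> \<epsilon> / (20 * A)" unfolding \<eta>_def by simp_all
    have "0 < \<eta>" unfolding \<eta>_def using A e0 by simp
    moreover have "10 * \<eta> * A \<le> 1"
    proof -
      have "(10 * A) * \<eta> \<le> (10 * A) * (1 / (10 * A))" using et1 A by (intro mult_left_mono) auto
      then show ?thesis using A by (simp add: mult.commute mult.left_commute)
    qed
    moreover have "10 * \<eta> * A \<le> \<epsilon> / 2"
    proof -
      have "(10 * A) * \<eta> \<le> (10 * A) * (\<epsilon> / (20 * A))" using et2 A by (intro mult_left_mono) auto
      then show ?thesis using A by (simp add: mult.commute mult.left_commute)
    qed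
    ultimately have eta: "0 < \<eta>" "10 * \<eta> * A \<le> 1" "10 * \<eta> * A \<le> \<epsilon> / 2" by auto
    have "eventually (\<lambda>h. dist (SUP \<xi>\<in>sphere 0 1. orlicz_inv P (1 / h) * orlicz_norm P \<mu> (u_fun \<xi> (1 - h))) 0 < \<eta>) (at_right 0)"
      using lim eta(1) by (rule tendstoD)
    then obtain b where b: "b > 0" and bb: "\<And>t. 0 < t \<Longrightarrow> t < b \<Longrightarrow>
        dist (SUP \<xi>\<in>sphere 0 1. orlicz_inv P (1 / t) * orlicz_norm P \<mu> (u_fun \<xi> (1 - t))) 0 < \<eta>"
      unfolding eventually_at_right_field by auto
    show "eventually (\<lambda>h. dist (P (A * orlicz_inv P (1 / h)) * rho \<mu> h) 0 < \<epsilon>) (at_right 0)"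
      unfolding eventually_at_right_field
    proof (intro exI[of _ "min b 1"] conjI allI impI)
      show "0 < min b 1" using b by simp
      fix h :: real assume h: "0 < h" "h < min b 1"
      have h1: "h < 1" using h by simp
      define y where "y = orlicz_inv P (1/h)"
      have y0: "0 < y" unfolding y_def using orl_inv_pos[OF orl] h by simp
      have PA: "0 < P (A * y)" using orl_pos[OF orl] A y0 by simp
      have sup: "(SUP \<xi>\<in>sphere 0 1. y * orlicz_norm P \<mu> (u_fun \<xi> (1 - h))) < \<eta>"
        using bb[of h] h unfolding y_def by (simp add: abs_less_iff)
      have W: "P (A * y) * measure \<mu> (window \<xi> h) \<le> \<epsilon> / 2" if xi: "\<xi> \<in> sphere 0 1" for \<xi>
      proof -
        have xi1: "cmod \<xi> = 1" using xi by simp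
        have "y * orlicz_norm P \<mu> (u_fun \<xi> (1 - h)) \<le> (SUP \<xi>\<in>sphere 0 1. y * orlicz_norm P \<mu> (u_fun \<xi> (1 - h)))"
        proof (rule cSUP_upper[OF xi])
          show "bdd_above ((\<lambda>\<xi>. y * orlicz_norm P \<mu> (u_fun \<xi> (1 - h))) ` sphere 0 1)"
          proof (rule bdd_aboveI2[where M="y * c0"])
            fix \<zeta> :: complex assume "\<zeta> \<in> sphere 0 1"
            then have "orlicz_norm P \<mu> (u_fun \<zeta> (1 - h)) \<le> c0" using norm_nonneg'(2)[of \<zeta> h] h h1 by simp
            then show "y * orlicz_norm P \<mu> (u_fun \<zeta> (1 - h)) \<le> y * c0" using y0 by simp
          qed
        qed
        then have "orlicz_norm P \<mu> (u_fun \<xi> (1 - h)) \<le> \<eta> / y" using sup y0 by (simp add: field_simps)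
        then have I: "(\<integral>\<^sup>+ x. ennreal (P (norm (u_fun \<xi> (1 - h) x) / (2 * (\<eta> / y)))) \<partial>\<mu>) \<le> 1"
          by (intro norm_le_dest[OF xi1 h(1) h1]) (use eta y0 in auto)
        have m: "measure \<mu> (window \<xi> h) * P (1 / (5 * (2 * (\<eta> / y)))) \<le> 1"
          by (rule lower_int[OF xi1 h(1) h1 _ I]) (use eta y0 in auto)
        have e1: "1 / (5 * (2 * (\<eta> / y))) = y / (10 * \<eta>)" using eta y0 by (simp add: field_simps)
        have "A * y = (10 * \<eta> * A) * (y / (10 * \<eta>))" using eta by (simp add: field_simps)
        then have "P (A * y) \<le> (10 * \<eta> * A) * P (y / (10 * \<eta>))"
          using orl_sub[OF orl, of "10 * \<eta> * A" "y / (10 * \<eta>)"] eta A y0 by simp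
        then have "P (A * y) * measure \<mu> (window \<xi> h) \<le> ((10 * \<eta> * A) * P (y / (10 * \<eta>))) * measure \<mu> (window \<xi> h)"
          by (rule mult_right_mono) simp
        also have "\<dots> = (10 * \<eta> * A) * (P (y / (10 * \<eta>)) * measure \<mu> (window \<xi> h))"
          by (rule mult.assoc)
        also have "\<dots> \<le> (10 * \<eta> * A) * 1"
        proof (rule mult_left_mono)
          show "P (y / (10 * \<eta>)) * measure \<mu> (window \<xi> h) \<le> 1" using m unfolding e1 by (simp only: mult.commute)
          show "0 \<le> 10 * \<eta> * A" using eta A by simp
        qed
        also have "\<dots> \<le> \<epsilon> / 2" using eta by simp
        finally show ?thesis .
      qed
      have "rho \<mu> h \<le> (\<epsilon> / 2) / P (A * y)"
      proof (rule rho_le)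
        fix \<xi> :: complex assume "\<xi> \<in> sphere 0 1"
        then have "measure \<mu> (window \<xi> h) * P (A * y) \<le> \<epsilon> / 2" using W by (simp only: mult.commute)
        then show "measure \<mu> (window \<xi> h) \<le> (\<epsilon> / 2) / P (A * y)" using PA by (simp add: le_divide_eq)
      qed
      then have "P (A * y) * rho \<mu> h \<le> \<epsilon> / 2" using PA by (simp add: le_divide_eq mult.commute)
      moreover have "0 \<le> P (A * y) * rho \<mu> h" using PA rho_nonneg[of h] by simp
      ultimately show "dist (P (A * orlicz_inv P (1 / h)) * rho \<mu> h) 0 < \<epsilon>"
        using e0 unfolding y_def by simp
    qed
  qed
qed

end

theorem mainTheorem12:
  fixes \<Psi> :: "real \<Rightarrow> real" and \<mu> :: "complex measure"
  assumes "orlicz_function \<Psi>"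
    and "finite_measure \<mu>"
    and "sets \<mu> = sets (restrict_space borel (cball (0::complex) 1))"
  shows "(psi_carleson \<Psi> \<mu> \<longleftrightarrow>
           (\<exists>C\<ge>1. \<forall>\<xi>\<in>sphere 0 1. \<forall>h\<in>{0<..<1}.
              orlicz_norm \<Psi> \<mu> (u_fun \<xi> (1 - h)) \<le> C / orlicz_inv \<Psi> (1 / h)))
       \<and> (vanishing_psi_carleson \<Psi> \<mu> \<longleftrightarrow>
           ((\<lambda>h. SUP \<xi>\<in>sphere 0 1. orlicz_inv \<Psi> (1 / h) * orlicz_norm \<Psi> \<mu> (u_fun \<xi> (1 - h)))
              \<longlongrightarrow> 0) (at_right 0))"
proof -
  interpret orl_ctx \<Psi> \<mu> by (rule orl_ctx.intro) (rule assms)+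
  show ?thesis
  proof (intro conjI iffI)
    assume "psi_carleson \<Psi> \<mu>" then show "\<exists>C\<ge>1. \<forall>\<xi>\<in>sphere 0 1. \<forall>h\<in>{0<..<1}.
              orlicz_norm \<Psi> \<mu> (u_fun \<xi> (1 - h)) \<le> C / orlicz_inv \<Psi> (1 / h)" by (rule P1a)
  next
    assume "\<exists>C\<ge>1. \<forall>\<xi>\<in>sphere 0 1. \<forall>h\<in>{0<..<1}.
              orlicz_norm \<Psi> \<mu> (u_fun \<xi> (1 - h)) \<le> C / orlicz_inv \<Psi> (1 / h)"
    then show "psi_carleson \<Psi> \<mu>" by (rule P1b)
  next
    assume "vanishing_psi_carleson \<Psi> \<mu>"
    then show "((\<lambda>h. SUP \<xi>\<in>sphere 0 1. orlicz_inv \<Psi> (1 / h) * orlicz_norm \<Psi> \<mu> (u_fun \<xi> (1 - h)))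
              \<longlongrightarrow> 0) (at_right 0)" by (rule P2a)
  next
    assume "((\<lambda>h. SUP \<xi>\<in>sphere 0 1. orlicz_inv \<Psi> (1 / h) * orlicz_norm \<Psi> \<mu> (u_fun \<xi> (1 - h)))
              \<longlongrightarrow> 0) (at_right 0)"
    then show "vanishing_psi_carleson \<Psi> \<mu>" by (rule P2b)
  qed
qed

end
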